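(* For any $\lambda>0$ and $n\ge 1$, $Z=\sum_{\sigma\in\Omega}\lambda^{-p(\sigma)}\geq(\sqrt{2}/\lambda)^{p_{max}}$, where $p_{max}=2n-2$.
   Context: Let $\Gamma$ be the triangular lattice. A configuration of $n$ particles is a set of $n$ vertices of $\Gamma$, considered up to translation. It is connected if the subgraph of $\Gamma$ induced by occupied vertices is connected; a hole is a maximal finite connected set of unoccupied vertices; $\Omega$ is the set of connected configurations of $n$ particles with no holes. For $\sigma\in\Omega$, $p(\sigma)$ is the length of the closed walk around its single external boundary, with an edge traversed twice counted twice. *)

theory Defs
  imports Complex_Main
begin

type_synonym vtx = "int \<times> int"

definition padd :: "vtx \<Rightarrow> vtx \<Rightarrow> vtx" where
  "padd u v = (fst u + fst v, snd u + snd v)"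

text \<open>The six unit directions of the triangular lattice, in counterclockwise order.\<close>
definition dir :: "nat \<Rightarrow> vtx" where
  "dir i = (case i mod 6 of 0 \<Rightarrow> (1,0) | Suc 0 \<Rightarrow> (0,1) | Suc (Suc 0) \<Rightarrow> (-1,1)
           | Suc (Suc (Suc 0)) \<Rightarrow> (-1,0) | Suc (Suc (Suc (Suc 0))) \<Rightarrow> (0,-1) | _ \<Rightarrow> (1,-1))"

definition adj :: "vtx \<Rightarrow> vtx \<Rightarrow> bool" where
  "adj u v \<longleftrightarrow> (\<exists>i<6. v = padd u (dir i))"

definition adj_on :: "vtx set \<Rightarrow> (vtx \<times> vtx) set" where
  "adj_on A = {(u,v). u \<in> A \<and> v \<in> A \<and> adj u v}"

definition connected_set :: "vtx set \<Rightarrow> bool" where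
  "connected_set A \<longleftrightarrow> (\<forall>x\<in>A. \<forall>y\<in>A. (x,y) \<in> (adj_on A)\<^sup>*)"

definition comp :: "vtx set \<Rightarrow> vtx \<Rightarrow> vtx set" where
  "comp A x = {y. (x,y) \<in> (adj_on A)\<^sup>*}"

definition is_hole :: "vtx set \<Rightarrow> vtx set \<Rightarrow> bool" where
  "is_hole S H \<longleftrightarrow> (\<exists>x. x \<notin> S \<and> H = comp (- S) x \<and> finite H)"

definition translate :: "vtx \<Rightarrow> vtx set \<Rightarrow> vtx set" where
  "translate v S = padd v ` S"

definition valid_conf :: "nat \<Rightarrow> vtx set \<Rightarrow> bool" where
  "valid_conf n S \<longleftrightarrow> finite S \<and> card S = n \<and> connected_set S \<and> \<not> (\<exists>H. is_hole S H)"

text \<open>Omega: the connected hole-free configurations of n particles, up to translation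
  (each element is a translation class of vertex sets).\<close>
definition Omega :: "nat \<Rightarrow> vtx set set set" where
  "Omega n = {range (\<lambda>v. translate v S) | S. valid_conf n S}"

text \<open>Perimeter: length of the closed walk around the external boundary, with edges traversed
  twice counted twice.  The walk traverses (once each) exactly the directed edges u -> u + dir i
  between occupied vertices whose right-hand triangular face has an unoccupied apex
  u + dir (i-1) lying in the external region (i.e. not in a hole).\<close>
definition perim :: "vtx set \<Rightarrow> nat" where
  "perim S = card {(u,i). u \<in> S \<and> i < (6::nat) \<and> padd u (dir i) \<in> S
      \<and> padd u (dir (i + 5)) \<notin> S \<and> \<not> (\<exists>H. is_hole S H \<and> padd u (dir (i + 5)) \<in> H)}"

definition perim_cls :: "vtx set set \<Rightarrow> nat" where
  "perim_cls C = perim (SOME S. S \<in> C)"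

end

theory Submission
  imports Defs
begin

lemma ex6: "(\<exists>i<(6::nat). P i) \<longleftrightarrow> P 0 \<or> P 1 \<or> P 2 \<or> P 3 \<or> P 4 \<or> P 5"
  by (auto simp: numeral_eq_Suc less_Suc_eq)

lemma dir_m: "i mod 6 = 0 \<Longrightarrow> dir i = (1,0)"
  "i mod 6 = Suc 0 \<Longrightarrow> dir i = (0,1)"
  "i mod 6 = Suc (Suc 0) \<Longrightarrow> dir i = (-1,1)"
  "i mod 6 = Suc (Suc (Suc 0)) \<Longrightarrow> dir i = (-1,0)"
  "i mod 6 = Suc (Suc (Suc (Suc 0))) \<Longrightarrow> dir i = (0,-1)"
  "i mod 6 = Suc (Suc (Suc (Suc (Suc 0)))) \<Longrightarrow> dir i = (1,-1)"
  unfolding dir_def by simp_all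

lemma dirv: "dir 0 = (1,0)" "dir 1 = (0,1)" "dir 2 = (-1,1)" "dir 3 = (-1,0)" "dir 4 = (0,-1)" "dir 5 = (1,-1)"
  "dir (Suc 0) = (0,1)" "dir (Suc (Suc 0)) = (-1,1)" "dir 6 = (1,0)" "dir 7 = (0,1)" "dir 8 = (-1,1)" "dir 9 = (-1,0)" "dir 10 = (0,-1)"
  by (rule dir_m; simp)+

lemma less6: "(i::nat) < 6 \<Longrightarrow> i = 0 \<or> i = 1 \<or> i = 2 \<or> i = 3 \<or> i = 4 \<or> i = 5"
  by auto

lemma dm1: "(x::int) - y = 1 \<longleftrightarrow> x = y + 1" "(x::int) - y = -1 \<longleftrightarrow> x + 1 = y" by auto

lemma adj_iff: "adj u v \<longleftrightarrow> (fst v - fst u, snd v - snd u) \<in> {(1,0),(0,1),(-1,1),(-1,0),(0,-1),(1,-1)}"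
  unfolding adj_def ex6 dirv padd_def by (cases u; cases v) (simp add: eq_diff_eq ac_simps dm1; blast)

lemma adj_sym: "adj u v \<Longrightarrow> adj v u"
proof -
  assume "adj u v"
  then obtain i where i: "i < 6" "v = padd u (dir i)" unfolding adj_def by blast
  have "u = padd v (dir (i+3))" using less6[OF i(1)] i(2)
    by (cases u) (auto simp: dirv padd_def)
  moreover have "(i + 3) mod 6 < 6" by simp
  moreover have "dir (i+3) = dir ((i+3) mod 6)" by (simp add: dir_def)
  ultimately show ?thesis unfolding adj_def by metis
qed

lemma adj_dir: "adj u (padd u (dir j))"
proof -
  have "j mod 6 < 6" by simp
  moreover have "dir j = dir (j mod 6)" by (simp add: dir_def)
  ultimately show ?thesis unfolding adj_def by metis
qed

lemma adj_dir5': "i < 6 \<Longrightarrow> adj (padd u (dir (i+5))) (padd u (dir i))"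
proof -
  assume i: "i < 6"
  have "padd u (dir i) = padd (padd u (dir (i+5))) (dir (i+1))" using less6[OF i]
    by (cases u) (auto simp: dirv padd_def)
  then show ?thesis using adj_dir by metis
qed

lemma dir_inj: "i < 6 \<Longrightarrow> j < 6 \<Longrightarrow> padd u (dir i) = padd u (dir j) \<Longrightarrow> i = j"
  by (drule less6, drule less6) (auto simp: dirv padd_def)

definition stair :: "nat \<Rightarrow> (nat \<Rightarrow> vtx) \<Rightarrow> bool" where
  "stair n q \<longleftrightarrow> (\<forall>k. Suc k < n \<longrightarrow> q (Suc k) = padd (q k) (1,0) \<or> q (Suc k) = padd (q k) (0,1))"

lemma stair_sum: "stair n q \<Longrightarrow> k < n \<Longrightarrow> fst (q k) + snd (q k) = fst (q 0) + snd (q 0) + int k"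
proof (induction k)
  case 0 then show ?case by simp
next
  case (Suc k)
  then have "q (Suc k) = padd (q k) (1,0) \<or> q (Suc k) = padd (q k) (0,1)" unfolding stair_def by blast
  with Suc show ?case by (auto simp: padd_def)
qed

lemma stair_mono: assumes "stair n q" "k \<le> j" shows "j < n \<Longrightarrow> fst (q k) \<le> fst (q j) \<and> snd (q k) \<le> snd (q j)"
  using assms(2)
proof (induction j rule: dec_induct)
  case base then show ?case by simp
next
  case (step m)
  then have "q (Suc m) = padd (q m) (1,0) \<or> q (Suc m) = padd (q m) (0,1)" using assms(1) unfolding stair_def by blast
  then have "fst (q m) \<le> fst (q (Suc m)) \<and> snd (q m) \<le> snd (q (Suc m))" by (auto simp: padd_def)
  with step show ?case by (meson Suc_lessD order_trans)
qed

lemma stair_inj: "stair n q \<Longrightarrow> i < n \<Longrightarrow> j < n \<Longrightarrow> q i = q j \<Longrightarrow> i = j"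
proof -
  assume a: "stair n q" "i < n" "j < n" "q i = q j"
  have "fst (q i) + snd (q i) = fst (q j) + snd (q j)" using a(4) by simp
  then have "int i = int j" using stair_sum[OF a(1) a(2)] stair_sum[OF a(1) a(3)] by linarith
  then show ?thesis by simp
qed

lemma stair_adj_le: "stair n q \<Longrightarrow> i \<le> j \<Longrightarrow> j < n \<Longrightarrow> adj (q i) (q j) \<Longrightarrow> j = Suc i"
proof -
  assume a: "stair n q" "i \<le> j" "j < n" "adj (q i) (q j)"
  have s: "fst (q j) - fst (q i) + (snd (q j) - snd (q i)) = int j - int i"
    using stair_sum[OF a(1), of i] stair_sum[OF a(1), of j] a(2,3) by linarith
  have m: "fst (q j) - fst (q i) \<ge> 0" "snd (q j) - snd (q i) \<ge> 0"
    using stair_mono[OF a(1) a(2) a(3)] by linarith+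
  from a(4) have "(fst (q j) - fst (q i), snd (q j) - snd (q i)) \<in> {(1,0),(0,1),(-1,1),(-1,0),(0,-1),(1,-1)}"
    by (simp add: adj_iff)
  then have "fst (q j) - fst (q i) + (snd (q j) - snd (q i)) = 1" using m
    by (elim insertE emptyE) simp_all
  with s show ?thesis by simp
qed

lemma stair_adj: "stair n q \<Longrightarrow> i < n \<Longrightarrow> j < n \<Longrightarrow> adj (q i) (q j) \<Longrightarrow> j = Suc i \<or> i = Suc j"
  by (metis adj_sym nat_le_linear stair_adj_le)

lemma stair_step: "stair n q \<Longrightarrow> Suc k < n \<Longrightarrow> adj (q k) (q (Suc k))"
proof -
  assume "stair n q" "Suc k < n"
  then have "q (Suc k) = padd (q k) (dir 0) \<or> q (Suc k) = padd (q k) (dir 1)" unfolding stair_def dirv by blast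
  then show ?thesis using adj_dir by metis
qed

lemma stair_translate: "stair n q \<Longrightarrow> stair n (\<lambda>k. padd v (q k))"
  unfolding stair_def padd_def by (metis (no_types, lifting) add.assoc fst_conv snd_conv)

lemma stair_path: assumes "stair n q" "i \<le> j" shows "j < n \<Longrightarrow> (q i, q j) \<in> (adj_on (q ` {..<n}))\<^sup>*"
  using assms(2)
proof (induction j rule: dec_induct)
  case base then show ?case by simp
next
  case (step m)
  have "(q m, q (Suc m)) \<in> adj_on (q ` {..<n})"
    using stair_step[OF assms(1) step.prems] step.prems unfolding adj_on_def by auto
  with step show ?case by (meson Suc_lessD rtrancl_into_rtrancl)
qed

lemma adj_on_conv: "(adj_on A)\<inverse> = adj_on A"
  unfolding adj_on_def using adj_sym by auto

lemma stair_conn: assumes "stair n q" shows "connected_set (q ` {..<n})"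
  unfolding connected_set_def
proof (intro ballI)
  fix x y assume "x \<in> q ` {..<n}" "y \<in> q ` {..<n}"
  then obtain i j where ij: "i < n" "j < n" "x = q i" "y = q j" by auto
  show "(x, y) \<in> (adj_on (q ` {..<n}))\<^sup>*"
  proof (cases "i \<le> j")
    case True then show ?thesis using stair_path[OF assms True] ij by simp
  next
    case False
    then have "(y, x) \<in> (adj_on (q ` {..<n}))\<^sup>*" using stair_path[OF assms, of j i] ij by simp
    then have "(x, y) \<in> ((adj_on (q ` {..<n}))\<inverse>)\<^sup>*" by (rule rtrancl_converseI)
    then show ?thesis by (simp add: adj_on_conv)
  qed
qed

definition ray :: "vtx \<Rightarrow> vtx \<Rightarrow> nat \<Rightarrow> vtx" where
  "ray x d t = (fst x + int t * fst d, snd x + int t * snd d)"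

lemma ray_Suc: "ray x d (Suc t) = padd (ray x d t) d"
  by (simp add: ray_def padd_def algebra_simps)

lemma ray_0: "ray x d 0 = x"
  by (simp add: ray_def)

lemma ray_comp: assumes "\<forall>t. ray x (dir j) t \<notin> S" shows "(x, ray x (dir j) t) \<in> (adj_on (-S))\<^sup>*"
proof (induction t)
  case 0 then show ?case by (simp add: ray_0)
next
  case (Suc t)
  have a: "adj (ray x (dir j) t) (ray x (dir j) (Suc t))" unfolding ray_Suc by (rule adj_dir)
  have "ray x (dir j) t \<in> -S" "ray x (dir j) (Suc t) \<in> -S" using assms by auto
  then have "(ray x (dir j) t, ray x (dir j) (Suc t)) \<in> adj_on (-S)"
    using a unfolding adj_on_def by blast
  with Suc show ?case by (meson rtrancl_into_rtrancl)
qed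

lemma ray_inj: "fst d \<noteq> 0 \<Longrightarrow> inj (ray x d)"
  unfolding inj_def ray_def by auto

lemma comp_inf: assumes "\<forall>t. ray x (dir j) t \<notin> S" "fst (dir j) \<noteq> 0" shows "infinite (comp (-S) x)"
proof
  assume f: "finite (comp (-S) x)"
  have "range (ray x (dir j)) \<subseteq> comp (-S) x"
    using ray_comp[OF assms(1)] unfolding comp_def by auto
  with f have "finite (range (ray x (dir j)))" by (rule finite_subset[rotated])
  then show False using ray_inj[OF assms(2)] finite_imageD by blast
qed

lemma stair_nohole: assumes "stair n q" shows "\<not> (\<exists>H. is_hole (q ` {..<n}) H)"
proof
  assume "\<exists>H. is_hole (q ` {..<n}) H"
  then obtain x where x: "x \<notin> q ` {..<n}" "finite (comp (- (q ` {..<n})) x)"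
    unfolding is_hole_def by auto
  have "\<exists>t. ray x (dir 5) t \<in> q ` {..<n}" using comp_inf[of x 5 "q ` {..<n}"] x(2) by (force simp: dirv)
  then obtain t1 k1 where t1: "k1 < n" "ray x (dir 5) t1 = q k1" by auto
  have "\<exists>t. ray x (dir 2) t \<in> q ` {..<n}" using comp_inf[of x 2 "q ` {..<n}"] x(2) by (force simp: dirv)
  then obtain t2 k2 where t2: "k2 < n" "ray x (dir 2) t2 = q k2" by auto
  have e1: "q k1 = (fst x + int t1, snd x - int t1)" using t1 by (simp add: ray_def dirv)
  have e2: "q k2 = (fst x - int t2, snd x + int t2)" using t2 by (simp add: ray_def dirv)
  have "int k1 = int k2"
    using stair_sum[OF assms t1(1)] stair_sum[OF assms t2(1)] e1 e2 by simp
  then have "q k1 = q k2" by simp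
  then have "t1 = 0" using e1 e2 by simp
  then show False using t1 x(1) ray_0 by (metis image_eqI lessThan_iff)
qed

lemma stair_notri: assumes "stair n q" "u \<in> q ` {..<n}" "i < 6" "padd u (dir i) \<in> q ` {..<n}"
  shows "padd u (dir (i + 5)) \<notin> q ` {..<n}"
proof
  assume "padd u (dir (i + 5)) \<in> q ` {..<n}"
  then obtain m where m: "m < n" "padd u (dir (i + 5)) = q m" by auto
  obtain a where a: "a < n" "u = q a" using assms(2) by auto
  obtain b where b: "b < n" "padd u (dir i) = q b" using assms(4) by auto
  have "adj (q a) (q b)" using adj_dir a b by metis
  then have 1: "b = Suc a \<or> a = Suc b" using stair_adj[OF assms(1) a(1) b(1)] by simp
  have "adj (q a) (q m)" using adj_dir a m by metis
  then have 2: "m = Suc a \<or> a = Suc m" using stair_adj[OF assms(1) a(1) m(1)] by simp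
  have "adj (q m) (q b)" using adj_dir5'[OF assms(3), of u] a b m by metis
  then have 3: "b = Suc m \<or> m = Suc b" using stair_adj[OF assms(1) m(1) b(1)] by simp
  from 1 2 3 show False by linarith
qed

lemma stair_perim_set: assumes "stair n q"
  shows "{(u,i). u \<in> q ` {..<n} \<and> i < (6::nat) \<and> padd u (dir i) \<in> q ` {..<n}
      \<and> padd u (dir (i + 5)) \<notin> q ` {..<n} \<and> \<not> (\<exists>H. is_hole (q ` {..<n}) H \<and> padd u (dir (i + 5)) \<in> H)}
    = {(u,i). u \<in> q ` {..<n} \<and> i < (6::nat) \<and> padd u (dir i) \<in> q ` {..<n}}"
  using stair_notri[OF assms] stair_nohole[OF assms] by blast

lemma card_dir_pairs: "card {(u,i). u \<in> S \<and> i < (6::nat) \<and> padd u (dir i) \<in> S}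
   = card {(u,v). u \<in> S \<and> v \<in> S \<and> adj u v}"
proof (rule bij_betw_same_card)
  show "bij_betw (\<lambda>(u,i). (u, padd u (dir i))) {(u,i). u \<in> S \<and> i < (6::nat) \<and> padd u (dir i) \<in> S}
     {(u,v). u \<in> S \<and> v \<in> S \<and> adj u v}"
    unfolding bij_betw_def
  proof
    show "inj_on (\<lambda>(u,i). (u, padd u (dir i))) {(u,i). u \<in> S \<and> i < (6::nat) \<and> padd u (dir i) \<in> S}"
      unfolding inj_on_def using dir_inj by auto
    show "(\<lambda>(u,i). (u, padd u (dir i))) ` {(u,i). u \<in> S \<and> i < (6::nat) \<and> padd u (dir i) \<in> S} =
      {(u,v). u \<in> S \<and> v \<in> S \<and> adj u v}"
    proof
      show "(\<lambda>(u,i). (u, padd u (dir i))) ` {(u,i). u \<in> S \<and> i < (6::nat) \<and> padd u (dir i) \<in> S} \<subseteq>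
      {(u,v). u \<in> S \<and> v \<in> S \<and> adj u v}" using adj_dir by auto
      show "{(u,v). u \<in> S \<and> v \<in> S \<and> adj u v} \<subseteq> (\<lambda>(u,i). (u, padd u (dir i))) ` {(u,i). u \<in> S \<and> i < (6::nat) \<and> padd u (dir i) \<in> S}"
      proof
        fix p assume "p \<in> {(u,v). u \<in> S \<and> v \<in> S \<and> adj u v}"
        then obtain u v where p: "p = (u,v)" "u \<in> S" "v \<in> S" "adj u v" by auto
        then obtain i where i: "i < 6" "v = padd u (dir i)" unfolding adj_def by auto
        show "p \<in> (\<lambda>(u,i). (u, padd u (dir i))) ` {(u,i). u \<in> S \<and> i < (6::nat) \<and> padd u (dir i) \<in> S}"
          using p i by (auto intro!: image_eqI[where x="(u,i)"])
      qed
    qed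
  qed
qed

lemma stair_edges: assumes "stair n q"
  shows "card {(u,v). u \<in> q ` {..<n} \<and> v \<in> q ` {..<n} \<and> adj u v} = 2 * (n - 1)"
proof -
  let ?A = "(\<lambda>k. (q k, q (Suc k))) ` {..<n-1}"
  let ?B = "(\<lambda>k. (q (Suc k), q k)) ` {..<n-1}"
  have E: "{(u,v). u \<in> q ` {..<n} \<and> v \<in> q ` {..<n} \<and> adj u v} = ?A \<union> ?B"
  proof
    show "{(u,v). u \<in> q ` {..<n} \<and> v \<in> q ` {..<n} \<and> adj u v} \<subseteq> ?A \<union> ?B"
    proof
      fix p assume "p \<in> {(u,v). u \<in> q ` {..<n} \<and> v \<in> q ` {..<n} \<and> adj u v}"
      then obtain a b where ab: "p = (q a, q b)" "a < n" "b < n" "adj (q a) (q b)" by auto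
      then have "b = Suc a \<or> a = Suc b" using stair_adj[OF assms] by blast
      then show "p \<in> ?A \<union> ?B" using ab by auto
    qed
    show "?A \<union> ?B \<subseteq> {(u,v). u \<in> q ` {..<n} \<and> v \<in> q ` {..<n} \<and> adj u v}"
    proof -
      have st: "\<And>k. k < n - 1 \<Longrightarrow> adj (q k) (q (Suc k))" using stair_step[OF assms] by simp
      have st2: "\<And>k. k < n - 1 \<Longrightarrow> adj (q (Suc k)) (q k)" using st adj_sym by blast
      show ?thesis using st st2 by fastforce
    qed
  qed
  have injA: "inj_on (\<lambda>k. (q k, q (Suc k))) {..<n-1}"
    unfolding inj_on_def using stair_inj[OF assms] by auto
  have injB: "inj_on (\<lambda>k. (q (Suc k), q k)) {..<n-1}"
    unfolding inj_on_def using stair_inj[OF assms] by auto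
  have disj: "?A \<inter> ?B = {}"
  proof (rule ccontr)
    assume "?A \<inter> ?B \<noteq> {}"
    then obtain k j where kj: "k < n - 1" "j < n - 1" "q k = q (Suc j)" "q (Suc k) = q j" by auto
    then have "k = Suc j" "Suc k = j" using stair_inj[OF assms] by auto
    then show False by simp
  qed
  have "card (?A \<union> ?B) = card ?A + card ?B" by (rule card_Un_disjoint) (use disj in auto)
  also have "\<dots> = 2 * (n - 1)" using card_image[OF injA] card_image[OF injB] by simp
  finally show ?thesis using E by simp
qed

lemma stair_perim: assumes "stair n q" shows "perim (q ` {..<n}) = 2 * (n - 1)"
  unfolding perim_def stair_perim_set[OF assms] card_dir_pairs using stair_edges[OF assms] .

lemma stair_valid: assumes "stair n q" shows "valid_conf n (q ` {..<n})"
proof -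
  have "inj_on q {..<n}" unfolding inj_on_def using stair_inj[OF assms] by auto
  then have "card (q ` {..<n}) = n" by (simp add: card_image)
  then show ?thesis unfolding valid_conf_def using stair_conn[OF assms] stair_nohole[OF assms] by simp
qed

lemma stair_eq: assumes "stair n q" "stair n q'" "q ` {..<n} = q' ` {..<n}" "k < n"
  shows "q k = q' k"
proof -
  have n: "0 < n" using assms(4) by simp
  have "q 0 \<in> q' ` {..<n}" using assms(3) n by (metis image_eqI lessThan_iff)
  then obtain j where j: "j < n" "q 0 = q' j" by auto
  have "q' 0 \<in> q ` {..<n}" using assms(3) n by (metis image_eqI lessThan_iff)
  then obtain i where i: "i < n" "q' 0 = q i" by auto
  have "fst (q 0) + snd (q 0) = fst (q' 0) + snd (q' 0) + int j" using stair_sum[OF assms(2) j(1)] j(2) by simp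
  moreover have "fst (q' 0) + snd (q' 0) = fst (q 0) + snd (q 0) + int i" using stair_sum[OF assms(1) i(1)] i(2) by simp
  ultimately have "j = 0" by linarith
  with j have q0: "q 0 = q' 0" by simp
  have "q k \<in> q' ` {..<n}" using assms(3,4) by (metis image_eqI lessThan_iff)
  then obtain m where m: "m < n" "q k = q' m" by auto
  have "fst (q k) + snd (q k) = fst (q 0) + snd (q 0) + int k" using stair_sum[OF assms(1) assms(4)] .
  moreover have "fst (q' m) + snd (q' m) = fst (q' 0) + snd (q' 0) + int m" using stair_sum[OF assms(2) m(1)] .
  ultimately have "int k = int m" using q0 m(2) by simp
  then show ?thesis using m by simp
qed

definition qw :: "bool list \<Rightarrow> nat \<Rightarrow> vtx" where
  "qw w k = (int (length (filter (\<lambda>b. b) (take k w))), int (length (filter (\<lambda>b. \<not> b) (take k w))))"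

lemma qw_0: "qw w 0 = (0,0)" by (simp add: qw_def)

lemma qw_Suc: "k < length w \<Longrightarrow> qw w (Suc k) = padd (qw w k) (if w ! k then (1,0) else (0,1))"
  by (simp add: qw_def take_Suc_conv_app_nth padd_def)

lemma qw_stair: "stair (Suc (length w)) (qw w)"
  unfolding stair_def using qw_Suc by auto

lemma translate_img: "translate v (q ` K) = (\<lambda>k. padd v (q k)) ` K"
  unfolding translate_def by auto

lemma translate_0: "translate (0,0) S = S"
  unfolding translate_def padd_def by auto

lemma translate_translate: "translate v (translate w S) = translate (padd v w) S"
proof -
  have "padd v \<circ> padd w = padd (padd v w)" by (rule ext) (simp add: padd_def add.assoc)
  then show ?thesis unfolding translate_def by (simp add: image_comp)
qed

lemma range_translate: "range (\<lambda>v. translate v (translate w S)) = range (\<lambda>v. translate v S)"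
proof
  show "range (\<lambda>v. translate v (translate w S)) \<subseteq> range (\<lambda>v. translate v S)"
    unfolding translate_translate by blast
  have "translate v S = translate (padd v (- fst w, - snd w)) (translate w S)" for v
    unfolding translate_translate by (simp add: padd_def)
  then show "range (\<lambda>v. translate v S) \<subseteq> range (\<lambda>v. translate v (translate w S))" by blast
qed

lemma adj_fst: "adj u v \<Longrightarrow> \<bar>fst v - fst u\<bar> \<le> 1"
  unfolding adj_iff by (elim insertE emptyE) simp_all

lemma adj_snd: "adj u v \<Longrightarrow> \<bar>snd v - snd u\<bar> \<le> 1"
  unfolding adj_iff by (elim insertE emptyE) simp_all

lemma conn_interval:
  assumes g: "\<And>u v. adj u v \<Longrightarrow> \<bar>g v - g u\<bar> \<le> (1::int)"
    and xy: "(x, y) \<in> (adj_on S)\<^sup>*" and x: "x \<in> S"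
  shows "\<forall>k. g x \<le> k \<longrightarrow> k \<le> g y \<longrightarrow> (\<exists>z\<in>S. g z = k)"
  using xy
proof (induction rule: rtrancl_induct)
  case base then show ?case using x by force
next
  case (step y y')
  show ?case
  proof (intro allI impI)
    fix k assume k: "g x \<le> k" "k \<le> g y'"
    have y': "y' \<in> S" "adj y y'" using step(2) unfolding adj_on_def by auto
    show "\<exists>z\<in>S. g z = k"
    proof (cases "k \<le> g y")
      case True then show ?thesis using step(3) k by blast
    next
      case False
      then have "k = g y'" using g[OF y'(2)] k by linarith
      then show ?thesis using y' by blast
    qed
  qed
qed

lemma conn_bound:
  assumes g: "\<And>u v. adj u v \<Longrightarrow> \<bar>g v - g u\<bar> \<le> (1::int)"
    and v: "valid_conf n S" and ne: "S \<noteq> {}"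
  shows "\<exists>m. \<forall>u\<in>S. m \<le> g u \<and> g u \<le> m + int n"
proof -
  have fin: "finite S" and cS: "card S = n" and con: "connected_set S" using v unfolding valid_conf_def by auto
  define m where "m = Min (g ` S)"
  define M where "M = Max (g ` S)"
  have fi: "finite (g ` S)" using fin by simp
  have ne2: "g ` S \<noteq> {}" using ne by simp
  obtain x where x: "x \<in> S" "g x = m" using Min_in[OF fi ne2] unfolding m_def by auto
  obtain y where y: "y \<in> S" "g y = M" using Max_in[OF fi ne2] unfolding M_def by auto
  have "{m..M} \<subseteq> g ` S"
  proof
    fix k assume "k \<in> {m..M}"
    then have "g x \<le> k" "k \<le> g y" using x y by auto
    moreover have "(x,y) \<in> (adj_on S)\<^sup>*" using con x y unfolding connected_set_def by blast
    ultimately obtain z where "z \<in> S" "g z = k" using conn_interval[where g=g and x=x and y=y and S=S, OF g] x by blast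
    then show "k \<in> g ` S" by blast
  qed
  then have "card {m..M} \<le> card (g ` S)" using fi by (metis card_mono)
  also have "\<dots> \<le> card S" using fin by (rule card_image_le)
  finally have "nat (M - m + 1) \<le> n" using cS by simp
  then have "M \<le> m + int n" by linarith
  moreover have "\<forall>u\<in>S. m \<le> g u \<and> g u \<le> M" using fi unfolding m_def M_def by auto
  ultimately show ?thesis by force
qed

lemma Omega_finite: assumes "n \<ge> 1" shows "finite (Omega n)"
proof -
  have "Omega n \<subseteq> (\<lambda>T. range (\<lambda>v. translate v T)) ` Pow ({0..int n} \<times> {0..int n})"
  proof
    fix C assume "C \<in> Omega n"
    then obtain S where S: "valid_conf n S" "C = range (\<lambda>v. translate v S)" unfolding Omega_def by auto
    have ne: "S \<noteq> {}" using S(1) assms unfolding valid_conf_def by auto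
    obtain m1 where m1: "\<forall>u\<in>S. m1 \<le> fst u \<and> fst u \<le> m1 + int n"
      using conn_bound[where g=fst, OF adj_fst S(1) ne] by blast
    obtain m2 where m2: "\<forall>u\<in>S. m2 \<le> snd u \<and> snd u \<le> m2 + int n"
      using conn_bound[where g=snd, OF adj_snd S(1) ne] by blast
    let ?T = "translate (-m1, -m2) S"
    have "?T \<subseteq> {0..int n} \<times> {0..int n}"
      unfolding translate_def padd_def using m1 m2 by force
    moreover have "C = range (\<lambda>v. translate v ?T)" using S(2) range_translate by simp
    ultimately show "C \<in> (\<lambda>T. range (\<lambda>v. translate v T)) ` Pow ({0..int n} \<times> {0..int n})" by blast
  qed
  then show ?thesis by (rule finite_subset) simp
qed

lemma final_arith: assumes "lam > 0"
  shows "(sqrt 2 / lam) ^ (2 * m) = real (2 ^ m) * lam powr (- real (2 * m))"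
proof -
  have "(sqrt 2 / lam) ^ (2 * m) = ((sqrt 2 / lam)^2) ^ m" by (simp add: power_mult)
  also have "\<dots> = (2 / lam^2) ^ m" by (simp add: power_divide)
  also have "\<dots> = 2 ^ m / (lam ^ (2*m))" by (simp add: power_divide power_mult)
  also have "lam powr (- real (2 * m)) = inverse (lam ^ (2*m))"
    using assms powr_realpow[OF assms, of "2*m"] by (simp add: powr_minus)
  ultimately show ?thesis by (simp add: field_simps)
qed

theorem lemma18:
  fixes lam :: real and n :: nat
  assumes "lam > 0" and "n \<ge> 1"
  shows "(\<Sum>C\<in>Omega n. lam powr (- real (perim_cls C))) \<ge> (sqrt 2 / lam) ^ (2 * n - 2)"
proof -
  define m where "m = n - 1"
  have nm: "n = Suc m" using assms(2) m_def by simp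
  define W where "W = {w :: bool list. set w \<subseteq> UNIV \<and> length w = m}"
  define cls where "cls w = range (\<lambda>v. translate v (qw w ` {..<n}))" for w
  define f where "f C = lam powr (- real (perim_cls C))" for C
  have stw: "stair n (qw w)" if "w \<in> W" for w
    using qw_stair[of w] that nm unfolding W_def by simp
  have self: "qw w ` {..<n} \<in> cls w" for w
    unfolding cls_def using translate_0 by (metis rangeI)
  have sub: "cls ` W \<subseteq> Omega n"
    unfolding Omega_def cls_def using stair_valid[OF stw] by blast
  have per: "perim_cls (cls w) = 2 * m" if w: "w \<in> W" for w
  proof -
    have "(SOME S. S \<in> cls w) \<in> cls w" using self by (rule someI)
    then obtain v where "(SOME S. S \<in> cls w) = (\<lambda>k. padd v (qw w k)) ` {..<n}"
      unfolding cls_def translate_img by auto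
    then show ?thesis unfolding perim_cls_def using stair_perim[OF stair_translate[OF stw[OF w]]] nm by simp
  qed
  have inj: "inj_on cls W"
  proof (rule inj_onI)
    fix w w' assume w: "w \<in> W" and w': "w' \<in> W" and e: "cls w = cls w'"
    have "qw w ` {..<n} \<in> cls w'" using self e by metis
    then obtain v where v: "qw w ` {..<n} = (\<lambda>k. padd v (qw w' k)) ` {..<n}"
      unfolding cls_def translate_img by auto
    have eq1: "qw w k = padd v (qw w' k)" if "k < n" for k
      using stair_eq[OF stw[OF w] stair_translate[OF stw[OF w']] v that] .
    have "v = (0,0)" using eq1[of 0] nm by (simp add: qw_0 padd_def)
    then have eq: "qw w k = qw w' k" if "k < n" for k using eq1[OF that] by (simp add: padd_def)
    have lw: "length w = m" "length w' = m" using w w' unfolding W_def by auto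
    show "w = w'"
    proof (rule nth_equalityI)
      show "length w = length w'" using lw by simp
      fix k assume k: "k < length w"
      have a: "qw w (Suc k) = padd (qw w k) (if w ! k then (1,0) else (0,1))" using qw_Suc k .
      have b: "qw w' (Suc k) = padd (qw w' k) (if w' ! k then (1,0) else (0,1))" using qw_Suc k lw by simp
      have "qw w (Suc k) = qw w' (Suc k)" "qw w k = qw w' k" using eq k lw nm by auto
      then show "w ! k = w' ! k" using a b by (auto simp: padd_def split: if_splits)
    qed
  qed
  have cardW: "card W = 2 ^ m"
    unfolding W_def using card_lists_length_eq[of "UNIV :: bool set" m] by simp
  have "sum f (cls ` W) \<le> sum f (Omega n)"
    by (rule sum_mono2[OF Omega_finite[OF assms(2)] sub]) (simp add: f_def)
  moreover have "sum f (cls ` W) = sum (f \<circ> cls) W" by (rule sum.reindex[OF inj])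
  moreover have "sum (f \<circ> cls) W = real (2 ^ m) * lam powr (- real (2 * m))"
    using per cardW by (simp add: f_def)
  moreover have "2 * n - 2 = 2 * m" using nm by simp
  ultimately show ?thesis using final_arith[OF assms(1), of m] unfolding f_def by simp
qed

end
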